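(* Let $n\ge 1$ and $N>n$ be integers, let $\lambda>0$, $\beta\in(0,1)$, and let $\tilde b_0\neq 0$ be a real number. Let $\hat\Sigma\in\mathbb{R}^{(n+1)\times(n+1)}$ be a symmetric positive definite Toeplitz matrix, $[\hat\Sigma]_{ts}=\hat r_{|t-s|}$ for $t,s=1,\dots,n+1$. Let $K_{TC}\in\mathbb{R}^{(n+1)\times(n+1)}$ be the matrix with entries $[K_{TC}]_{ts}=\beta^{\max(t,s)}-\beta^{n+2}$ for $t,s=1,\dots,n+1$, let $v=[1,0,\dots,0]^T\in\mathbb{R}^{n+1}$, and define $$\hat{\mathbf b}_{ML}=[\hat b_0,\hat b_1,\dots,\hat b_n]^T=\tilde b_0^{-1}\left(\hat\Sigma+((N-n)\lambda K_{TC})^{-1}\right)^{-1}v .$$ If the polynomial $\hat b_{ML}(z)=\sum_{k=0}^n \hat b_k z^{-k}$ is not identically zero, then all its zeros lie strictly inside the unit circle, i.e. every (complex) root $\breve z$ of $\hat b_0 z^n+\hat b_1 z^{n-1}+\dots+\hat b_n$ satisfies $|\breve z|<1$.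
   Context: This is the regularized (kernel-based) maximum entropy estimate of the coefficients of a high-order AR model $b(z)y_t=e_t$ with a Gaussian prior $\mathbf b\sim\mathcal N(0,\lambda K_{TC})$ ("tuned-correlated kernel"). In the paper, $\hat r_k=\frac1N\sum_{t=1}^{N-k}y_ty_{t+k}$ are sample covariance lags of data $y_1,\dots,y_N$ and $\tilde b_0$ is a preliminary estimate of $b_0$; for the claim only the stated properties of $\hat\Sigma$ and $\tilde b_0$ are needed. *)

theory Defs
  imports Complex_Main "Jordan_Normal_Form.Gauss_Jordan_Elimination"
    "HOL-Computational_Algebra.Polynomial"
begin

definition sym_pos_def_mat :: "nat \<Rightarrow> real mat \<Rightarrow> bool" where
  "sym_pos_def_mat m A \<longleftrightarrow> A \<in> carrier_mat m m \<and> transpose_mat A = A \<and>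
     (\<forall>x \<in> carrier_vec m. x \<noteq> 0\<^sub>v m \<longrightarrow> x \<bullet> (A *\<^sub>v x) > 0)"

definition toeplitz_mat :: "nat \<Rightarrow> real mat \<Rightarrow> bool" where
  "toeplitz_mat m A \<longleftrightarrow> A \<in> carrier_mat m m \<and>
     (\<exists>r :: nat \<Rightarrow> real. \<forall>i<m. \<forall>j<m. A $$ (i,j) = r (nat \<bar>int i - int j\<bar>))"

(* TC kernel, indices shifted to 0-based: entry (i,j) corresponds to t=i+1, s=j+1 *)
definition K_TC :: "nat \<Rightarrow> real \<Rightarrow> real mat" where
  "K_TC n \<beta> = mat (n+1) (n+1) (\<lambda>(i,j). \<beta> ^ (max (i+1) (j+1)) - \<beta> ^ (n+2))"

definition minv :: "real mat \<Rightarrow> real mat" where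
  "minv A = the (mat_inverse A)"

definition b_ML :: "nat \<Rightarrow> nat \<Rightarrow> real \<Rightarrow> real \<Rightarrow> real \<Rightarrow> real mat \<Rightarrow> real vec" where
  "b_ML n N lam \<beta> b0t Sig =
     (1 / b0t) \<cdot>\<^sub>v (minv (Sig + minv ((real (N - n) * lam) \<cdot>\<^sub>m K_TC n \<beta>))
        *\<^sub>v unit_vec (n+1) 0)"

definition bpoly :: "nat \<Rightarrow> real vec \<Rightarrow> real poly" where
  "bpoly n b = (\<Sum>k\<le>n. monom (b $ k) (n - k))"

end

theory Submission
  imports Defs "Jordan_Normal_Form.Determinant"
begin

definition Qf :: "nat \<Rightarrow> (nat \<Rightarrow> nat \<Rightarrow> real) \<Rightarrow> (nat \<Rightarrow> complex) \<Rightarrow> (nat \<Rightarrow> complex) \<Rightarrow> complex" where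
  "Qf m a x y = (\<Sum>i<m. \<Sum>j<m. cnj (x i) * of_real (a i j) * y j)"

lemma Qf_diff_right: "Qf m a x (\<lambda>j. y j - c * z j) = Qf m a x y - c * Qf m a x z"
  unfolding Qf_def by (simp add: algebra_simps sum_subtractf sum_distrib_left)

lemma Qf_diff_left: "Qf m a (\<lambda>j. y j - c * z j) x = Qf m a y x - cnj c * Qf m a z x"
  unfolding Qf_def by (simp add: algebra_simps sum_subtractf sum_distrib_left)

lemma Qf_sym: assumes "\<And>i j. i < m \<Longrightarrow> j < m \<Longrightarrow> a i j = a j i"
  shows "Qf m a x y = cnj (Qf m a y x)"
  unfolding Qf_def
  apply (simp add: sum_distrib_left)
  apply (subst sum.swap)
  apply (intro sum.cong refl)
  using assms by (simp add: mult.commute)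

lemma core:
  fixes z0 :: complex
  assumes sym: "\<And>i j. i < m \<Longrightarrow> j < m \<Longrightarrow> a i j = a j i"
    and pd: "\<And>x. (\<exists>k<m. x k \<noteq> 0) \<Longrightarrow> Re (Qf m a x x) > 0"
    and G: "\<And>k. k < m \<Longrightarrow> G k = h k - z0 * s k"
    and Gnz: "\<exists>k<m. G k \<noteq> 0" and snz: "\<exists>k<m. s k \<noteq> 0"
    and orth: "Qf m a s G = 0"
    and mono: "Re (Qf m a h h) \<le> Re (Qf m a s s)"
  shows "cmod z0 < 1"
proof -
  have QG: "Qf m a G G = Qf m a (\<lambda>j. h j - z0 * s j) (\<lambda>j. h j - z0 * s j)"
    unfolding Qf_def using G by (intro sum.cong refl) auto
  have o: "Qf m a s (\<lambda>j. h j - z0 * s j) = 0"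
    using orth unfolding Qf_def using G by (metis (no_types, lifting) lessThan_iff sum.cong)
  hence o2: "Qf m a s h = z0 * Qf m a s s" by (simp add: Qf_diff_right)
  have o3: "Qf m a h s = cnj z0 * cnj (Qf m a s s)"
    using Qf_sym[OF sym, where x=h and y=s] o2 by simp
  have "Qf m a G G = Qf m a h h - z0 * Qf m a h s - cnj z0 * (Qf m a s h - z0 * Qf m a s s)"
    unfolding QG Qf_diff_left Qf_diff_right by simp
  also have "\<dots> = Qf m a h h - z0 * cnj z0 * cnj (Qf m a s s)" using o2 o3 by simp
  finally have e: "Re (Qf m a G G) = Re (Qf m a h h) - (cmod z0)^2 * Re (Qf m a s s)"
    by (simp add: complex_norm_square[symmetric])
  have p1: "Re (Qf m a G G) > 0" using pd Gnz by blast
  have p2: "Re (Qf m a s s) > 0" using pd snz by blast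
  have "(cmod z0)^2 * Re (Qf m a s s) < 1 * Re (Qf m a s s)" using e p1 mono by simp
  hence "(cmod z0)^2 < 1" using p2 by (simp add: mult_less_cancel_right)
  thus ?thesis by (simp add: power_less_one_iff abs_square_less_1)
qed


definition dd :: "nat \<Rightarrow> nat \<Rightarrow> real" where
  "dd k i = (if i = k then 1 else 0) - (if i = Suc k then 1 else 0)"

definition ww :: "real \<Rightarrow> real \<Rightarrow> nat \<Rightarrow> real" where
  "ww c \<beta> k = 1 / (c * (\<beta>^(k+1) - \<beta>^(k+2)))"

definition Mm :: "nat \<Rightarrow> real \<Rightarrow> real \<Rightarrow> real mat" where
  "Mm m c \<beta> = mat m m (\<lambda>(i,j). \<Sum>k<m. dd k i * ww c \<beta> k * dd k j)"

lemma sum_dd: "k < m \<Longrightarrow> (\<Sum>l<m. f l * dd k l) = f k - (if Suc k < m then f (Suc k) else 0)"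
  unfolding dd_def by (simp add: algebra_simps sum_subtractf if_distrib[of "\<lambda>x. f _ * x"] sum.If_cases
     cong: if_cong) 

lemma sum_dd_ind: assumes i: "i < m" and j: "j < m"
  shows "(\<Sum>k<m. dd k j * (if i \<le> k then 1 else 0)) = (if i = j then 1 else (0::real))"
proof -
  have e1: "(\<lambda>k. (if j = k then 1 else 0) * (if i \<le> k then 1 else 0)) = (\<lambda>k. if j = k then (if i \<le> j then 1 else (0::real)) else 0)"
    by auto
  have e2: "(\<lambda>k. (if j = Suc k then 1 else 0) * (if i \<le> k then 1 else 0)) = (\<lambda>k. if j - 1 = k then (if j \<noteq> 0 \<and> i \<le> j - 1 then 1 else (0::real)) else 0)"
    by (rule ext) auto
  have "(\<Sum>k<m. dd k j * (if i \<le> k then 1 else 0)) =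
     (\<Sum>k<m. (if j = k then 1 else 0) * (if i \<le> k then 1 else 0)) - (\<Sum>k<m. (if j = Suc k then 1 else 0) * (if i \<le> k then 1 else (0::real)))"
    unfolding dd_def by (simp add: sum_subtractf algebra_simps)
  also have "\<dots> = (if i \<le> j then 1 else 0) - (if j \<noteq> 0 \<and> i \<le> j - 1 then 1 else 0)"
    unfolding e1 e2 using j by (simp add: sum.delta)
  also have "\<dots> = (if i = j then 1 else 0)" by auto
  finally show ?thesis .
qed

lemma ww_pos: "c > 0 \<Longrightarrow> 0 < \<beta> \<Longrightarrow> \<beta> < 1 \<Longrightarrow> ww c \<beta> k > 0"
  unfolding ww_def by (simp add: power_strict_decreasing)

lemma ww_mono: "c > 0 \<Longrightarrow> 0 < \<beta> \<Longrightarrow> \<beta> < 1 \<Longrightarrow> ww c \<beta> k \<le> ww c \<beta> (Suc k)"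
proof -
  assume c: "c > 0" and b: "0 < \<beta>" "\<beta> < 1"
  have p: "0 < \<beta>^(k+1) - \<beta>^(k+2)" using b by (simp add: power_strict_decreasing)
  have e: "\<beta>^(Suc k+1) - \<beta>^(Suc k+2) = \<beta> * (\<beta>^(k+1) - \<beta>^(k+2))" by (simp add: algebra_simps)
  have "c * (\<beta>^(Suc k+1) - \<beta>^(Suc k+2)) \<le> c * (\<beta>^(k+1) - \<beta>^(k+2))"
    unfolding e using c p b by (simp add: mult_left_le_one_le)
  moreover have "0 < c * (\<beta>^(Suc k+1) - \<beta>^(Suc k+2))" unfolding e using c p b by simp
  ultimately show ?thesis unfolding ww_def by (simp add: frac_le)
qed

lemma KM_one:
  assumes c: "c > 0" and b: "0 < \<beta>" "\<beta> < 1"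
  shows "(c \<cdot>\<^sub>m K_TC n \<beta>) * Mm (n+1) c \<beta> = 1\<^sub>m (n+1)"
proof (rule eq_matI)
  let ?m = "n+1"
  define kf where "kf i j = c * (\<beta>^(max (i+1) (j+1)) - \<beta>^(n+2))" for i j
  fix i j assume i: "i < dim_row (1\<^sub>m ?m)" and j: "j < dim_col (1\<^sub>m (n + 1))"
  hence i: "i < ?m" and j: "j < ?m" by auto
  have inner: "(\<Sum>l<?m. kf i l * dd k l) = (if i \<le> k then c * (\<beta>^(k+1) - \<beta>^(k+2)) else 0)"
    if k: "k < ?m" for k
  proof -
    have "(\<Sum>l<?m. kf i l * dd k l) = kf i k - (if Suc k < ?m then kf i (Suc k) else 0)"
      by (rule sum_dd[OF k])
    also have "\<dots> = (if i \<le> k then c * (\<beta>^(k+1) - \<beta>^(k+2)) else 0)"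
    proof (cases "Suc k < ?m")
      case True
      then show ?thesis using i k unfolding kf_def
        by (cases "i \<le> k"; cases "i = Suc k") (auto simp: max_def algebra_simps)
    next
      case False
      hence "k = n" using k by simp
      then show ?thesis using i k unfolding kf_def by (auto simp: max_def algebra_simps)
    qed
    finally show ?thesis .
  qed
  have "((c \<cdot>\<^sub>m K_TC n \<beta>) * Mm ?m c \<beta>) $$ (i,j) = (\<Sum>l<?m. kf i l * (\<Sum>k<?m. dd k l * ww c \<beta> k * dd k j))"
    using i j unfolding K_TC_def Mm_def kf_def
    by (simp add: scalar_prod_def row_def col_def atLeast0LessThan)
  also have "\<dots> = (\<Sum>k<?m. (ww c \<beta> k * dd k j) * (\<Sum>l<?m. kf i l * dd k l))"
    unfolding sum_distrib_left
    by (subst sum.swap) (intro sum.cong refl, simp add: mult_ac)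
  also have "\<dots> = (\<Sum>k<?m. dd k j * (if i \<le> k then 1 else 0))"
  proof (intro sum.cong refl)
    fix k assume "k \<in> {..<?m}"
    hence k: "k < ?m" by simp
    have p: "c * (\<beta>^(k+1) - \<beta>^(k+2)) \<noteq> 0" using ww_pos[OF c b, of k] unfolding ww_def by auto
    show "(ww c \<beta> k * dd k j) * (\<Sum>l<?m. kf i l * dd k l) = dd k j * (if i \<le> k then 1 else 0)"
      unfolding inner[OF k] using p unfolding ww_def by auto
  qed
  also have "\<dots> = (if i = j then 1 else 0)"
    by (rule sum_dd_ind[OF i j])
  finally show "((c \<cdot>\<^sub>m K_TC n \<beta>) * Mm ?m c \<beta>) $$ (i,j) = 1\<^sub>m ?m $$ (i,j)" using i j by simp
qed (auto simp: K_TC_def Mm_def)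


lemma minv_eq: assumes A: "A \<in> carrier_mat m m" and B: "B \<in> carrier_mat m m" and AB: "A * B = 1\<^sub>m m"
  shows "minv A = B"
proof -
  have "det A * det B = 1" using arg_cong[OF AB, of det] det_mult[OF A B] det_one by simp
  hence "det A \<noteq> 0" by auto
  hence U: "A \<in> Units (ring_mat TYPE(real) m m)" by (rule det_non_zero_imp_unit[OF A])
  obtain C where C: "mat_inverse A = Some C"
    using mat_inverse(1)[OF A, of m] U by (cases "mat_inverse A") auto
  from mat_inverse(2)[OF A C] have CA: "C * A = 1\<^sub>m m" and Cc: "C \<in> carrier_mat m m" by auto
  have "C = C * (A * B)" using AB Cc by simp
  also have "\<dots> = (C * A) * B" using A B Cc by (simp add: assoc_mult_mat)
  also have "\<dots> = B" using CA B by simp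
  finally show ?thesis unfolding minv_def C by simp
qed

lemma sum_dd_c: assumes k: "k < m" shows "(\<Sum>i<m. complex_of_real (dd k i) * x i) = x k - (if Suc k < m then x (Suc k) else 0)"
proof -
  have e1: "(\<lambda>i. complex_of_real (dd k i) * x i) = (\<lambda>i. (if k = i then x k else 0) - (if Suc k = i then x (Suc k) else 0))"
    unfolding dd_def by (rule ext) auto
  show ?thesis unfolding e1 sum_subtractf using k by (simp add: sum.delta)
qed

lemma cnj_mult_self: "cnj d * d = complex_of_real ((cmod d)^2)"
  using complex_norm_square[of d] by (simp add: mult.commute)

lemma triple_sum: "(\<Sum>i\<in>A. \<Sum>j\<in>B. (w::complex) * f i * g j) = w * sum f A * sum g B"
proof -
  have "w * sum f A * sum g B = w * (\<Sum>i\<in>A. \<Sum>j\<in>B. f i * g j)" by (simp only: mult.assoc sum_product)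
  also have "\<dots> = (\<Sum>i\<in>A. \<Sum>j\<in>B. w * f i * g j)" by (simp add: sum_distrib_left mult.assoc)
  finally show ?thesis by simp
qed

lemma Qf_Mm: "Qf m (\<lambda>i j. Mm m c \<beta> $$ (i,j)) x x =
   of_real (\<Sum>k<m. ww c \<beta> k * (cmod (x k - (if Suc k < m then x (Suc k) else 0)))^2)"
proof -
  have "Qf m (\<lambda>i j. Mm m c \<beta> $$ (i,j)) x x =
     (\<Sum>i<m. \<Sum>j<m. \<Sum>k<m. of_real (ww c \<beta> k) * (of_real (dd k i) * cnj (x i)) * (of_real (dd k j) * x j))"
    unfolding Qf_def Mm_def 
    by (rule sum.cong[OF refl], rule sum.cong[OF refl]) (simp add: sum_distrib_left sum_distrib_right mult_ac)
  also have "\<dots> = (\<Sum>k<m. of_real (ww c \<beta> k) * (\<Sum>i<m. of_real (dd k i) * cnj (x i)) * (\<Sum>j<m. of_real (dd k j) * x j))"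
  proof -
    have "(\<Sum>i<m. \<Sum>j<m. \<Sum>k<m. of_real (ww c \<beta> k) * (of_real (dd k i) * cnj (x i)) * (of_real (dd k j) * x j))
       = (\<Sum>i<m. \<Sum>k<m. \<Sum>j<m. of_real (ww c \<beta> k) * (of_real (dd k i) * cnj (x i)) * (of_real (dd k j) * x j))"
      by (rule sum.cong[OF refl], rule sum.swap)
    also have "\<dots> = (\<Sum>k<m. \<Sum>i<m. \<Sum>j<m. of_real (ww c \<beta> k) * (of_real (dd k i) * cnj (x i)) * (of_real (dd k j) * x j))"
      by (rule sum.swap)
    also have "\<dots> = (\<Sum>k<m. of_real (ww c \<beta> k) * (\<Sum>i<m. of_real (dd k i) * cnj (x i)) * (\<Sum>j<m. of_real (dd k j) * x j))"
      by (rule sum.cong[OF refl]) (rule triple_sum)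
    finally show ?thesis .
  qed
  also have "\<dots> = (\<Sum>k<m. of_real (ww c \<beta> k) * (cnj (\<Sum>i<m. of_real (dd k i) * x i) * (\<Sum>j<m. of_real (dd k j) * x j)))"
    by (simp add: mult_ac)
  also have "\<dots> = (\<Sum>k<m. of_real (ww c \<beta> k * (cmod (x k - (if Suc k < m then x (Suc k) else 0)))^2))"
  proof (rule sum.cong[OF refl])
    fix k assume "k \<in> {..<m}"
    hence k: "k < m" by simp
    show "of_real (ww c \<beta> k) * (cnj (\<Sum>i<m. of_real (dd k i) * x i) * (\<Sum>j<m. of_real (dd k j) * x j)) =
      of_real (ww c \<beta> k * (cmod (x k - (if Suc k < m then x (Suc k) else 0)))^2)"
      unfolding sum_dd_c[OF k] cnj_mult_self by simp
  qed
  finally show ?thesis by simp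
qed


definition rq :: "nat \<Rightarrow> (nat \<Rightarrow> nat \<Rightarrow> real) \<Rightarrow> (nat \<Rightarrow> real) \<Rightarrow> real" where
  "rq m a v = (\<Sum>i<m. \<Sum>j<m. v i * a i j * v j)"

lemma Re_Qf: "Re (Qf m a x x) = rq m a (\<lambda>i. Re (x i)) + rq m a (\<lambda>i. Im (x i))"
  unfolding Qf_def rq_def by (simp add: sum.distrib[symmetric] algebra_simps)

lemma rq_vec: assumes "S \<in> carrier_mat m m"
  shows "vec m v \<bullet> (S *\<^sub>v vec m v) = rq m (\<lambda>i j. S $$ (i,j)) v"
  using assms unfolding rq_def scalar_prod_def
  by (simp add: row_def atLeast0LessThan sum_distrib_left mult_ac scalar_prod_def)

lemma Qf_add: "Qf m (\<lambda>i j. a i j + b i j) x y = Qf m a x y + Qf m b x y"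
  unfolding Qf_def by (simp add: sum.distrib[symmetric] algebra_simps)

lemma rq_nonneg: assumes "sym_pos_def_mat m S"
  shows "rq m (\<lambda>i j. S $$ (i,j)) v \<ge> 0"
    and "(\<exists>k<m. v k \<noteq> 0) \<Longrightarrow> rq m (\<lambda>i j. S $$ (i,j)) v > 0"
proof -
  have S: "S \<in> carrier_mat m m" using assms unfolding sym_pos_def_mat_def by auto
  have pd: "\<And>x. x \<in> carrier_vec m \<Longrightarrow> x \<noteq> 0\<^sub>v m \<Longrightarrow> x \<bullet> (S *\<^sub>v x) > 0"
    using assms unfolding sym_pos_def_mat_def by auto
  show pos: "rq m (\<lambda>i j. S $$ (i,j)) v > 0" if "\<exists>k<m. v k \<noteq> 0"
  proof -
    from that obtain k where k: "k < m" "v k \<noteq> 0" by auto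
    have "vec m v \<noteq> 0\<^sub>v m" using k by (metis index_vec index_zero_vec(1))
    thus ?thesis using pd[of "vec m v"] rq_vec[OF S] by simp
  qed
  show "rq m (\<lambda>i j. S $$ (i,j)) v \<ge> 0"
  proof (cases "\<exists>k<m. v k \<noteq> 0")
    case True thus ?thesis using pos by force
  next
    case False thus ?thesis unfolding rq_def by simp
  qed
qed

lemma Qf_pd_Sig: assumes "sym_pos_def_mat m S" "\<exists>k<m. x k \<noteq> 0"
  shows "Re (Qf m (\<lambda>i j. S $$ (i,j)) x x) > 0"
proof -
  from assms(2) obtain k where k: "k < m" "x k \<noteq> 0" by auto
  hence "Re (x k) \<noteq> 0 \<or> Im (x k) \<noteq> 0" using complex_eqI by force
  thus ?thesis unfolding Re_Qf using rq_nonneg[OF assms(1)] k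
    by (meson add_nonneg_pos add_pos_nonneg)
qed

lemma Qf_Sig_nonneg: assumes "sym_pos_def_mat m S"
  shows "Re (Qf m (\<lambda>i j. S $$ (i,j)) x x) \<ge> 0"
  unfolding Re_Qf using rq_nonneg(1)[OF assms] by (simp add: add_nonneg_nonneg)

lemma Qf_Mm_nonneg: "c > 0 \<Longrightarrow> 0 < \<beta> \<Longrightarrow> \<beta> < 1 \<Longrightarrow> Re (Qf m (\<lambda>i j. Mm m c \<beta> $$ (i,j)) x x) \<ge> 0"
  unfolding Qf_Mm Re_complex_of_real
  by (rule sum_nonneg, rule mult_nonneg_nonneg, rule less_imp_le[OF ww_pos], auto)

lemma Qf_shift_toeplitz:
  assumes hn: "h n = 0" and s: "\<And>k. s k = (if k = 0 then 0 else h (k - 1))"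
    and T: "\<And>i j. i < Suc n \<Longrightarrow> j < Suc n \<Longrightarrow> a i j = r (nat \<bar>int i - int j\<bar>)"
  shows "Qf (Suc n) a s s = Qf (Suc n) a h h"
proof -
  have "Qf (Suc n) a s s = (\<Sum>i<n. \<Sum>j<n. cnj (s (Suc i)) * of_real (a (Suc i) (Suc j)) * s (Suc j))"
    unfolding Qf_def sum.lessThan_Suc_shift using s by simp
  also have "\<dots> = (\<Sum>i<n. \<Sum>j<n. cnj (h i) * of_real (r (nat \<bar>int i - int j\<bar>)) * h j)"
    using s T by (intro sum.cong refl) auto
  also have "\<dots> = Qf (Suc n) a h h"
    unfolding Qf_def sum.lessThan_Suc using hn T by (simp add: less_Suc_eq)
  finally show ?thesis .
qed

lemma Qf_shift_Mm:
  assumes n: "n \<ge> 1" and c: "c > 0" and b: "0 < \<beta>" "\<beta> < 1"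
    and hn: "h n = 0" and s: "\<And>k. s k = (if k = 0 then 0 else h (k - 1))"
  shows "Re (Qf (Suc n) (\<lambda>i j. Mm (Suc n) c \<beta> $$ (i,j)) h h) \<le> Re (Qf (Suc n) (\<lambda>i j. Mm (Suc n) c \<beta> $$ (i,j)) s s)"
proof -
  define dh where "dh k = cmod (h k - (if Suc k < Suc n then h (Suc k) else 0))" for k
  have "Re (Qf (Suc n) (\<lambda>i j. Mm (Suc n) c \<beta> $$ (i,j)) h h) = (\<Sum>k<Suc n. ww c \<beta> k * (dh k)^2)"
    unfolding Qf_Mm dh_def by simp
  also have "\<dots> = (\<Sum>k<n. ww c \<beta> k * (dh k)^2)" unfolding sum.lessThan_Suc dh_def using hn by simp
  also have "\<dots> \<le> (\<Sum>k<n. ww c \<beta> (Suc k) * (dh k)^2)"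
    using ww_mono[OF c b] by (intro sum_mono mult_right_mono) auto
  also have "\<dots> \<le> ww c \<beta> 0 * (cmod (s 0 - s 1))^2 + (\<Sum>k<n. ww c \<beta> (Suc k) * (dh k)^2)"
    using ww_pos[OF c b, of 0] by simp
  also have "\<dots> = Re (Qf (Suc n) (\<lambda>i j. Mm (Suc n) c \<beta> $$ (i,j)) s s)"
    unfolding Qf_Mm Re_complex_of_real sum.lessThan_Suc_shift
  proof -
    have "(\<Sum>k<n. ww c \<beta> (Suc k) * (dh k)^2) =
       (\<Sum>k<n. ww c \<beta> (Suc k) * (cmod (s (Suc k) - (if Suc (Suc k) < Suc n then s (Suc (Suc k)) else 0)))^2)"
    proof (rule sum.cong[OF refl])
      fix k assume "k \<in> {..<n}" hence k: "k < n" by simp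
      show "ww c \<beta> (Suc k) * (dh k)^2 = ww c \<beta> (Suc k) * (cmod (s (Suc k) - (if Suc (Suc k) < Suc n then s (Suc (Suc k)) else 0)))^2"
        unfolding dh_def s using k hn by (cases "Suc k = n") auto
    qed
    thus "ww c \<beta> 0 * (cmod (s 0 - s 1))\<^sup>2 + (\<Sum>k<n. ww c \<beta> (Suc k) * (dh k)\<^sup>2) =
      ww c \<beta> 0 * (cmod (s 0 - (if Suc 0 < Suc n then s (Suc 0) else 0)))\<^sup>2 +
      (\<Sum>k<n. ww c \<beta> (Suc k) * (cmod (s (Suc k) - (if Suc (Suc k) < Suc n then s (Suc (Suc k)) else 0)))\<^sup>2)"
      using n by simp
  qed
  finally show ?thesis .
qed


lemma Qf_cong: "(\<And>i j. i < m \<Longrightarrow> j < m \<Longrightarrow> a i j = b i j) \<Longrightarrow> Qf m a x y = Qf m b x y"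
  unfolding Qf_def by (intro sum.cong refl) auto

lemma Qf_mat_vec: assumes A: "A \<in> carrier_mat m m" and v: "v \<in> carrier_vec m"
  shows "Qf m (\<lambda>i j. A $$ (i,j)) x (\<lambda>j. of_real (v $ j)) = (\<Sum>i<m. cnj (x i) * of_real ((A *\<^sub>v v) $ i))"
  unfolding Qf_def
proof (rule sum.cong[OF refl])
  fix i assume "i \<in> {..<m}" hence i: "i < m" by simp
  have "(A *\<^sub>v v) $ i = (\<Sum>j<m. A $$ (i,j) * v $ j)"
    using A v i by (simp add: scalar_prod_def row_def atLeast0LessThan)
  thus "(\<Sum>j<m. cnj (x i) * of_real (A $$ (i, j)) * of_real (v $ j)) = cnj (x i) * of_real ((A *\<^sub>v v) $ i)"
    by (simp add: sum_distrib_left mult.assoc)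
qed

lemma coeff_bpoly: "coeff (bpoly n b) j = (if j \<le> n then b $ (n - j) else 0)"
proof -
  have "coeff (bpoly n b) j = (\<Sum>k\<le>n. if n - k = j then b $ k else 0)"
    unfolding bpoly_def coeff_sum by (simp add: coeff_monom)
  also have "\<dots> = (\<Sum>k\<le>n. if k = n - j \<and> j \<le> n then b $ (n - j) else 0)"
    by (intro sum.cong refl) auto
  also have "\<dots> = (if j \<le> n then b $ (n - j) else 0)"
    by (cases "j \<le> n") (simp_all add: sum.delta')
  finally show ?thesis .
qed

theorem proposition2:
  fixes n N :: nat and lam \<beta> b0t :: real and Sig :: "real mat"
  assumes "n \<ge> 1" and "N > n" and "lam > 0" and "0 < \<beta>" and "\<beta> < 1" and "b0t \<noteq> 0"
    and "sym_pos_def_mat (n+1) Sig" and "toeplitz_mat (n+1) Sig"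
    and "bpoly n (b_ML n N lam \<beta> b0t Sig) \<noteq> 0"
  shows "\<forall>z :: complex. poly (map_poly of_real (bpoly n (b_ML n N lam \<beta> b0t Sig))) z = 0
           \<longrightarrow> cmod z < 1"
proof (intro allI impI)
  fix z0 :: complex
  assume root: "poly (map_poly of_real (bpoly n (b_ML n N lam \<beta> b0t Sig))) z0 = 0"
  note n1 = assms(1) and b = assms(4,5) and b0 = assms(6) and spd = assms(7) and tp = assms(8)
  define m where "m = Suc n"
  define c where "c = real (N - n) * lam"
  have c: "c > 0" unfolding c_def using assms(2,3) by simp
  have Sc: "Sig \<in> carrier_mat m m" using spd unfolding sym_pos_def_mat_def m_def by simp
  have Kc: "c \<cdot>\<^sub>m K_TC n \<beta> \<in> carrier_mat m m" unfolding K_TC_def m_def by simp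
  have Mc: "Mm m c \<beta> \<in> carrier_mat m m" unfolding Mm_def by simp
  have minvK: "minv (c \<cdot>\<^sub>m K_TC n \<beta>) = Mm m c \<beta>"
    using minv_eq[OF Kc Mc] KM_one[OF c b, of n] unfolding m_def by simp
  define A where "A = Sig + Mm m c \<beta>"
  have Ac: "A \<in> carrier_mat m m" unfolding A_def using Sc Mc by simp
  define a where "a i j = A $$ (i,j)" for i j
  have a_split: "\<And>x y. Qf m a x y = Qf m (\<lambda>i j. Sig $$ (i,j)) x y + Qf m (\<lambda>i j. Mm m c \<beta> $$ (i,j)) x y"
    unfolding Qf_add[symmetric] by (rule Qf_cong) (use Sc Mc in \<open>simp add: a_def A_def\<close>)
  have pdA: "Re (Qf m a x x) > 0" if "\<exists>k<m. x k \<noteq> 0" for x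
    unfolding a_split using Qf_pd_Sig[OF spd[folded Suc_eq_plus1 m_def] that] Qf_Mm_nonneg[OF c b, of m x]
    by simp
  have sym: "a i j = a j i" if "i < m" "j < m" for i j
  proof -
    have "Sig $$ (i,j) = transpose_mat Sig $$ (i,j)" using spd unfolding sym_pos_def_mat_def by simp
    also have "\<dots> = Sig $$ (j,i)" using Sc that by simp
    finally show ?thesis unfolding a_def A_def using Sc Mc that by (simp add: Mm_def mult_ac)
  qed
  have "det A \<noteq> 0"
  proof
    assume "det A = 0"
    then obtain v where v: "v \<in> carrier_vec m" "v \<noteq> 0\<^sub>v m" "A *\<^sub>v v = 0\<^sub>v m"
      using det_0_iff_vec_prod_zero[OF Ac] by auto
    define x where "x j = complex_of_real (v $ j)" for j
    have "\<exists>k<m. x k \<noteq> 0"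
    proof (rule ccontr)
      assume "\<not> ?thesis"
      hence "v = 0\<^sub>v m" using v(1) unfolding x_def by (intro eq_vecI) auto
      with v(2) show False by simp
    qed
    hence "Re (Qf m a x x) > 0" by (rule pdA)
    moreover have "Qf m a x x = 0"
      unfolding a_def x_def Qf_mat_vec[OF Ac v(1)] using v(3) by simp
    ultimately show False by simp
  qed
  hence U: "A \<in> Units (ring_mat TYPE(real) m m)" by (rule det_non_zero_imp_unit[OF Ac])
  obtain B where B: "mat_inverse A = Some B"
    using mat_inverse(1)[OF Ac, of m] U by (cases "mat_inverse A") auto
  from mat_inverse(2)[OF Ac B] have AB: "A * B = 1\<^sub>m m" and Bc: "B \<in> carrier_mat m m" by auto
  define bv where "bv = b_ML n N lam \<beta> b0t Sig"
  have bv: "bv = (1 / b0t) \<cdot>\<^sub>v (B *\<^sub>v unit_vec m 0)"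
  proof -
    have mk: "minv (real (N - n) * lam \<cdot>\<^sub>m K_TC n \<beta>) = Mm (n+1) c \<beta>"
      using minvK unfolding c_def m_def by simp
    have "minv (Sig + Mm (n+1) c \<beta>) = B" using B unfolding minv_def A_def m_def by simp
    thus ?thesis unfolding bv_def b_ML_def mk m_def by simp
  qed
  have bvc: "bv \<in> carrier_vec m" unfolding bv using Bc by simp
  have Abv: "A *\<^sub>v bv = (1 / b0t) \<cdot>\<^sub>v unit_vec m 0"
  proof -
    have "A *\<^sub>v bv = (1 / b0t) \<cdot>\<^sub>v (A *\<^sub>v (B *\<^sub>v unit_vec m 0))"
      unfolding bv by (rule mult_mat_vec[OF Ac]) (use Bc in simp)
    also have "A *\<^sub>v (B *\<^sub>v unit_vec m 0) = (A * B) *\<^sub>v unit_vec m 0"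
      using Ac Bc by (simp add: assoc_mult_mat_vec)
    finally show ?thesis unfolding AB by simp
  qed
  define P where "P = map_poly complex_of_real (bpoly n bv)"
  have coeffP: "coeff P j = (if j \<le> n then of_real (bv $ (n - j)) else 0)" for j
    unfolding P_def by (simp add: coeff_map_poly coeff_bpoly)
  have Pnz: "P \<noteq> 0"
  proof
    assume "P = 0"
    hence "coeff (bpoly n bv) j = 0" for j using coeffP[of j] by (simp add: coeff_bpoly split: if_splits)
    hence "bpoly n bv = 0" by (intro poly_eqI) simp
    thus False using assms(9) unfolding bv_def by simp
  qed
  have "poly P z0 = 0" using root unfolding P_def bv_def .
  then obtain Qp where PQ: "P = [:-z0, 1:] * Qp" unfolding poly_eq_0_iff_dvd by (elim dvdE)
  have Qnz: "Qp \<noteq> 0" using Pnz PQ by auto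
  have "degree P \<le> n" by (rule degree_le) (simp add: coeffP)
  moreover have "degree P = degree Qp + 1" unfolding PQ using Qnz by (subst degree_mult_eq) auto
  ultimately have degQ: "degree Qp \<le> n - 1" by simp
  have Qhigh: "coeff Qp j = 0" if "j \<ge> n" for j
    using degQ that n1 by (intro coeff_eq_0) simp
  have coeffPQ: "coeff P j = (case j of 0 \<Rightarrow> 0 | Suc j' \<Rightarrow> coeff Qp j') - z0 * coeff Qp j" for j
    unfolding PQ by (simp add: coeff_pCons split: nat.split)
  define h where "h k = (if k < n then coeff Qp (n - 1 - k) else 0)" for k
  define s where "s k = (if k = 0 then 0 else h (k - 1))" for k
  define G where "G k = complex_of_real (bv $ k)" for k
  have hn: "h n = 0" unfolding h_def by simp
  have G: "G k = h k - z0 * s k" if "k < m" for k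
  proof -
    have "G k = coeff P (n - k)" using that unfolding G_def coeffP m_def by simp
    also have "\<dots> = h k - z0 * s k"
      unfolding coeffPQ h_def s_def using that n1 Qhigh[of n] unfolding m_def
      by (cases "n - k") (auto simp: Suc_diff_Suc intro!: arg_cong[where f="coeff Qp"])
    finally show ?thesis .
  qed
  have snz: "\<exists>k<m. s k \<noteq> 0"
  proof -
    let ?j = "degree Qp"
    have "coeff Qp ?j \<noteq> 0" using Qnz by simp
    moreover have "h (n - 1 - ?j) = coeff Qp ?j" unfolding h_def using degQ n1 by simp
    ultimately show ?thesis unfolding s_def m_def using n1 degQ
      by (intro exI[of _ "Suc (n - 1 - ?j)"]) auto
  qed
  have Gnz: "\<exists>k<m. G k \<noteq> 0"
  proof (rule ccontr)
    assume "\<not> ?thesis"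
    hence "coeff (bpoly n bv) j = 0" for j unfolding G_def coeff_bpoly m_def
      by (auto simp: less_Suc_eq_le)
    hence "bpoly n bv = 0" by (intro poly_eqI) simp
    thus False using assms(9) unfolding bv_def by simp
  qed
  have orth: "Qf m a s G = 0"
    unfolding a_def G_def Qf_mat_vec[OF Ac bvc] Abv using Ac
    by (intro sum.neutral) (auto simp: s_def)
  have mono: "Re (Qf m a h h) \<le> Re (Qf m a s s)"
  proof -
    obtain r where r: "\<And>i j. i < m \<Longrightarrow> j < m \<Longrightarrow> Sig $$ (i,j) = r (nat \<bar>int i - int j\<bar>)"
      using tp unfolding toeplitz_mat_def m_def by auto
    have "Qf m (\<lambda>i j. Sig $$ (i,j)) s s = Qf m (\<lambda>i j. Sig $$ (i,j)) h h"
      unfolding m_def by (rule Qf_shift_toeplitz[OF hn s_def]) (use r in \<open>auto simp: m_def\<close>)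
    moreover have "Re (Qf m (\<lambda>i j. Mm m c \<beta> $$ (i,j)) h h) \<le> Re (Qf m (\<lambda>i j. Mm m c \<beta> $$ (i,j)) s s)"
      unfolding m_def by (rule Qf_shift_Mm[OF n1 c b hn s_def])
    ultimately show ?thesis unfolding a_split by simp
  qed
  show "cmod z0 < 1"
    by (rule core[OF sym pdA G Gnz snz orth mono])
qed

end
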